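(* Let $X$ be a phylogenetic vertex of a quiver. Then: (i) $X$ has a primitive ancestor; (ii) all primitive ancestors of $X$ are isotypic to each other; (iii) every short full evolution for $X$ is universal; (iv) every vertex appearing in a short full evolution for $X$ is phylogenetic.
   Context: A quiver consists of a class of vertices and, for each ordered pair of vertices $(A,B)$, a set of edges $A\to B$ (loops and multiple edges allowed). An evolution of length $m\ge 0$ is a sequence $A_0\leftarrow A_1\leftarrow\cdots\leftarrow A_m$ of vertices together with edges $A_k\to A_{k-1}$ ($1\le k\le m$); $A_0$ is its initial and $A_m$ its terminal vertex. Write $A\le B$ ($A$ is an ancestor of $B$) if there is an evolution with initial vertex $A$ and terminal vertex $B$; $A,B$ are isotypic ($A\sim B$) if $A\le B$ and $B\le A$. A vertex $A$ is primitive if every ancestor of $A$ is isotypic to $A$. A full evolution for $X$ is an evolution with primitive initial vertex and terminal vertex $X$. The height $h(X)$ is the smallest length of a full evolution for $X$ ($\infty$ if none); a full evolution for $X$ is short if its length equals $h(X)$. An evolution $\alpha=(A_0\leftarrow\cdots\leftarrow A_m)$ embeds in $\beta=(B_0\leftarrow\cdots\leftarrow B_n)$ if $m\le n$ and there are $0\le r_0<\cdots<r_m\le n$ with $A_k\sim B_{r_k}$. A universal evolution for $X$ is a full evolution for $X$ embedding in every full evolution for $X$; $X$ is phylogenetic if one exists. *)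

theory Defs
  imports Main "HOL-Library.Extended_Nat"
begin

text \<open>A quiver on vertex type 'v with edge type 'e: Q A B is the set of edges A \<rightarrow> B.
An evolution A_0 \<leftarrow> A_1 \<leftarrow> ... \<leftarrow> A_m is a pair (vertex list [A_0,...,A_m],
edge list [e_1,...,e_m]) with e_k an edge A_k \<rightarrow> A_(k-1).\<close>

type_synonym ('v, 'e) quiver = "'v \<Rightarrow> 'v \<Rightarrow> 'e set"
type_synonym ('v, 'e) evol = "'v list \<times> 'e list"

definition evolution :: "('v, 'e) quiver \<Rightarrow> ('v, 'e) evol \<Rightarrow> bool" where
  "evolution Q ev \<longleftrightarrow> fst ev \<noteq> [] \<and> length (snd ev) = length (fst ev) - 1 \<and>
     (\<forall>k. 1 \<le> k \<and> k < length (fst ev) \<longrightarrow> snd ev ! (k - 1) \<in> Q (fst ev ! k) (fst ev ! (k - 1)))"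

definition evlen :: "('v, 'e) evol \<Rightarrow> nat" where
  "evlen ev = length (fst ev) - 1"

definition initial :: "('v, 'e) evol \<Rightarrow> 'v" where
  "initial ev = hd (fst ev)"

definition terminal :: "('v, 'e) evol \<Rightarrow> 'v" where
  "terminal ev = last (fst ev)"

definition ancestor :: "('v, 'e) quiver \<Rightarrow> 'v \<Rightarrow> 'v \<Rightarrow> bool" where
  "ancestor Q A B \<longleftrightarrow> (\<exists>ev. evolution Q ev \<and> initial ev = A \<and> terminal ev = B)"

definition isotypic :: "('v, 'e) quiver \<Rightarrow> 'v \<Rightarrow> 'v \<Rightarrow> bool" where
  "isotypic Q A B \<longleftrightarrow> ancestor Q A B \<and> ancestor Q B A"

definition primitive :: "('v, 'e) quiver \<Rightarrow> 'v \<Rightarrow> bool" where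
  "primitive Q A \<longleftrightarrow> (\<forall>B. ancestor Q B A \<longrightarrow> isotypic Q B A)"

definition full_evolution :: "('v, 'e) quiver \<Rightarrow> 'v \<Rightarrow> ('v, 'e) evol \<Rightarrow> bool" where
  "full_evolution Q X ev \<longleftrightarrow> evolution Q ev \<and> primitive Q (initial ev) \<and> terminal ev = X"

definition height :: "('v, 'e) quiver \<Rightarrow> 'v \<Rightarrow> enat" where
  "height Q X = (if \<exists>ev. full_evolution Q X ev
                 then enat (LEAST m. \<exists>ev. full_evolution Q X ev \<and> evlen ev = m)
                 else \<infinity>)"

definition short_evolution :: "('v, 'e) quiver \<Rightarrow> 'v \<Rightarrow> ('v, 'e) evol \<Rightarrow> bool" where
  "short_evolution Q X ev \<longleftrightarrow> full_evolution Q X ev \<and> enat (evlen ev) = height Q X"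

definition embeds :: "('v, 'e) quiver \<Rightarrow> ('v, 'e) evol \<Rightarrow> ('v, 'e) evol \<Rightarrow> bool" where
  "embeds Q \<alpha> \<beta> \<longleftrightarrow> evlen \<alpha> \<le> evlen \<beta> \<and>
     (\<exists>r :: nat \<Rightarrow> nat. strict_mono_on {0..evlen \<alpha>} r \<and>
        (\<forall>k \<le> evlen \<alpha>. r k \<le> evlen \<beta> \<and> isotypic Q (fst \<alpha> ! k) (fst \<beta> ! r k)))"

definition universal_evolution :: "('v, 'e) quiver \<Rightarrow> 'v \<Rightarrow> ('v, 'e) evol \<Rightarrow> bool" where
  "universal_evolution Q X ev \<longleftrightarrow> full_evolution Q X ev \<and>
     (\<forall>\<beta>. full_evolution Q X \<beta> \<longrightarrow> embeds Q ev \<beta>)"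

definition phylogenetic :: "('v, 'e) quiver \<Rightarrow> 'v \<Rightarrow> bool" where
  "phylogenetic Q X \<longleftrightarrow> (\<exists>ev. universal_evolution Q X ev)"

end

theory Submission imports Defs begin

lemma evol_take:
  assumes "evolution Q ev" "i \<le> evlen ev"
  shows "evolution Q (take (Suc i) (fst ev), take i (snd ev))"
    "initial (take (Suc i) (fst ev), take i (snd ev)) = initial ev"
    "terminal (take (Suc i) (fst ev), take i (snd ev)) = fst ev ! i"
    "evlen (take (Suc i) (fst ev), take i (snd ev)) = i"
  using assms apply (auto simp: evolution_def evlen_def initial_def terminal_def hd_take last_conv_nth min_def)
  by (metis One_nat_def Suc_pred' le_antisym length_greater_0_conv not_less_eq_eq)

lemma evol_drop:
  assumes "evolution Q ev" "i \<le> evlen ev"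
  shows "evolution Q (drop i (fst ev), drop i (snd ev))"
    "initial (drop i (fst ev), drop i (snd ev)) = fst ev ! i"
    "terminal (drop i (fst ev), drop i (snd ev)) = terminal ev"
    "evlen (drop i (fst ev), drop i (snd ev)) = evlen ev - i"
proof -
  have L: "length (fst ev) = Suc (evlen ev)" "length (snd ev) = evlen ev"
    using assms by (auto simp: evolution_def evlen_def)
  show "evolution Q (drop i (fst ev), drop i (snd ev))"
    unfolding evolution_def
  proof (intro conjI allI impI)
    fix k assume k: "1 \<le> k \<and> k < length (fst (drop i (fst ev), drop i (snd ev)))"
    then have "snd ev ! (i + k - 1) \<in> Q (fst ev ! (i+k)) (fst ev ! (i+k-1))"
      using assms(1) L unfolding evolution_def by auto
    then show "snd (drop i (fst ev), drop i (snd ev)) ! (k - 1)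
         \<in> Q (fst (drop i (fst ev), drop i (snd ev)) ! k) (fst (drop i (fst ev), drop i (snd ev)) ! (k - 1))"
      using k L assms by (simp add: Suc_leI add_diff_assoc)
  qed (use L assms in auto)
  show "initial (drop i (fst ev), drop i (snd ev)) = fst ev ! i"
    using L assms by (simp add: initial_def hd_drop_conv_nth)
  show "terminal (drop i (fst ev), drop i (snd ev)) = terminal ev"
    using L assms by (simp add: terminal_def)
  show "evlen (drop i (fst ev), drop i (snd ev)) = evlen ev - i"
    using L by (simp add: evlen_def)
qed

lemma evol_append:
  assumes a: "evolution Q a" and b: "evolution Q b" and t: "terminal a = initial b"
  shows "evolution Q (fst a @ tl (fst b), snd a @ snd b)"
    "initial (fst a @ tl (fst b), snd a @ snd b) = initial a"
    "terminal (fst a @ tl (fst b), snd a @ snd b) = terminal b"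
    "evlen (fst a @ tl (fst b), snd a @ snd b) = evlen a + evlen b"
    "\<And>j. j \<le> evlen a \<Longrightarrow> (fst a @ tl (fst b)) ! j = fst a ! j"
proof -
  obtain as es where A: "a = (as, es)" by (cases a)
  obtain b0 bs fs where B: "b = (b0 # bs, fs)" using b unfolding evolution_def
    by (cases b) (metis fst_conv list.exhaust)
  have la: "as \<noteq> []" "length es = length as - 1" and ea: "\<And>k. 1 \<le> k \<Longrightarrow> k < length as \<Longrightarrow> es ! (k-1) \<in> Q (as!k) (as!(k-1))"
    using a A unfolding evolution_def by auto
  have lb: "length fs = length bs" and eb: "\<And>k. 1 \<le> k \<Longrightarrow> k < Suc (length bs) \<Longrightarrow> fs ! (k-1) \<in> Q ((b0#bs)!k) ((b0#bs)!(k-1))"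
    using b B unfolding evolution_def by auto
  have lst: "last as = b0" using t A B by (simp add: terminal_def initial_def)
  have lastn: "as ! (length as - 1) = b0" using lst la by (simp add: last_conv_nth)
  have "evolution Q (as @ bs, es @ fs)"
    unfolding evolution_def
  proof (intro conjI allI impI)
    fix k assume k: "1 \<le> k \<and> k < length (fst (as @ bs, es @ fs))"
    show "snd (as @ bs, es @ fs) ! (k - 1) \<in> Q (fst (as @ bs, es @ fs) ! k) (fst (as @ bs, es @ fs) ! (k - 1))"
    proof (cases "k < length as")
      case True
      have "k - 1 < length es" "k - 1 < length as" using True k la by auto
      then show ?thesis using ea[of k] k True by (simp add: nth_append)
    next
      case False
      define j where "j = k - length as + 1"
      have j: "1 \<le> j" "j < Suc (length bs)" using k False la by (auto simp: j_def)
      have "length as > 0" using la by simp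
      then have "k - 1 = length es + (j-1)" using False la j k unfolding j_def by linarith
      then have e: "(es @ fs) ! (k-1) = fs ! (j-1)" by (simp add: nth_append_length_plus)
      have v1: "(as @ bs) ! k = (b0#bs) ! j" using False j by (simp add: nth_append j_def)
      have v2: "(as @ bs) ! (k-1) = (b0#bs) ! (j-1)"
      proof (cases "k = length as")
        case True then show ?thesis using lastn la by (simp add: nth_append j_def)
      next
        case False2: False
        then have "j - 1 = Suc (k - 1 - length as)" using False j by (simp add: j_def)
        moreover have "k - 1 = length as + (k-1-length as)" using False False2 by linarith
        ultimately show ?thesis by (metis nth_append_length_plus nth_Cons_Suc)
      qed
      show ?thesis using eb[OF j] e v1 v2 by simp
    qed
  qed (use la lb in \<open>auto simp: Suc_leI\<close>)
  then show "evolution Q (fst a @ tl (fst b), snd a @ snd b)" using A B by simp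
  show "initial (fst a @ tl (fst b), snd a @ snd b) = initial a" using A B la by (simp add: initial_def)
  show "terminal (fst a @ tl (fst b), snd a @ snd b) = terminal b" using A B la lst by (simp add: terminal_def)
  show "evlen (fst a @ tl (fst b), snd a @ snd b) = evlen a + evlen b" using A B la by (simp add: evlen_def Suc_leI)
  show "\<And>j. j \<le> evlen a \<Longrightarrow> (fst a @ tl (fst b)) ! j = fst a ! j"
  proof -
    fix j assume "j \<le> evlen a"
    then have "j < length (fst a)" using A la by (cases as) (auto simp: evlen_def)
    then show "(fst a @ tl (fst b)) ! j = fst a ! j" by (simp add: nth_append)
  qed
qed

lemma anc_refl: "ancestor Q A A"
  unfolding ancestor_def
  by (rule exI[of _ "([A],[])"]) (auto simp: evolution_def initial_def terminal_def)

lemma anc_trans: "ancestor Q A B \<Longrightarrow> ancestor Q B C \<Longrightarrow> ancestor Q A C"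
  unfolding ancestor_def using evol_append by metis

lemma iso_refl: "isotypic Q A A" by (simp add: isotypic_def anc_refl)
lemma iso_sym: "isotypic Q A B \<Longrightarrow> isotypic Q B A" by (simp add: isotypic_def)
lemma iso_trans: "isotypic Q A B \<Longrightarrow> isotypic Q B C \<Longrightarrow> isotypic Q A C"
  unfolding isotypic_def using anc_trans by metis

lemma anc_nth1: "evolution Q ev \<Longrightarrow> i \<le> evlen ev \<Longrightarrow> ancestor Q (initial ev) (fst ev ! i)"
  unfolding ancestor_def using evol_take by metis

lemma anc_full: "full_evolution Q X ev \<Longrightarrow> ancestor Q (initial ev) X"
  unfolding ancestor_def full_evolution_def by blast

lemma smono_gap:
  assumes "strict_mono_on {0..n} (r::nat\<Rightarrow>nat)" "i \<le> j" "j \<le> n"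
  shows "r i + (j - i) \<le> r j"
  using assms(2,3)
proof (induction j)
  case 0 then show ?case by simp
next
  case (Suc j)
  show ?case
  proof (cases "i = Suc j")
    case True then show ?thesis by simp
  next
    case False
    then have "i \<le> j" using Suc by simp
    then have "r i + (j - i) \<le> r j" using Suc by simp
    moreover have "r j < r (Suc j)" using assms(1) Suc(3) by (intro strict_mono_onD[OF assms(1)]) auto
    ultimately show ?thesis using \<open>i \<le> j\<close> by simp
  qed
qed

lemma core:
  assumes U: "universal_evolution Q X U" and S: "short_evolution Q X S"
  shows "evlen S = evlen U" "\<And>k. k \<le> evlen U \<Longrightarrow> isotypic Q (fst U ! k) (fst S ! k)"
proof -
  have Uf: "full_evolution Q X U" and Sf: "full_evolution Q X S" using U S
    by (auto simp: universal_evolution_def short_evolution_def)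
  have "embeds Q U S" using U Sf unfolding universal_evolution_def by blast
  then obtain r where le: "evlen U \<le> evlen S" and r: "strict_mono_on {0..evlen U} r"
    and rk: "\<And>k. k \<le> evlen U \<Longrightarrow> r k \<le> evlen S \<and> isotypic Q (fst U ! k) (fst S ! r k)"
    unfolding embeds_def by blast
  have "enat (evlen S) = enat (LEAST m. \<exists>ev. full_evolution Q X ev \<and> evlen ev = m)"
  proof -
    have ex: "\<exists>ev. full_evolution Q X ev" using Uf by blast
    show ?thesis using S ex unfolding short_evolution_def height_def by simp
  qed
  moreover have "(LEAST m. \<exists>ev. full_evolution Q X ev \<and> evlen ev = m) \<le> evlen U"
    using Uf by (intro Least_le) blast
  ultimately show eq: "evlen S = evlen U" using le by simp
  fix k assume k: "k \<le> evlen U"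
  have "r 0 + (k - 0) \<le> r k" using smono_gap[OF r, of 0 k] k by simp
  moreover have "r k + (evlen U - k) \<le> r (evlen U)" using smono_gap[OF r, of k "evlen U"] k by simp
  moreover have "r (evlen U) \<le> evlen U" using rk[of "evlen U"] eq by simp
  ultimately have "r k = k" by linarith
  then show "isotypic Q (fst U ! k) (fst S ! k)" using rk[OF k] by simp
qed

theorem theorem5p3:
  fixes Q :: "('v, 'e) quiver" and X :: 'v
  assumes "phylogenetic Q X"
  shows "(\<exists>A. primitive Q A \<and> ancestor Q A X)
    \<and> (\<forall>A B. primitive Q A \<and> ancestor Q A X \<and> primitive Q B \<and> ancestor Q B X \<longrightarrow> isotypic Q A B)
    \<and> (\<forall>ev. short_evolution Q X ev \<longrightarrow> universal_evolution Q X ev)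
    \<and> (\<forall>ev. short_evolution Q X ev \<longrightarrow> (\<forall>Y \<in> set (fst ev). phylogenetic Q Y))"
proof -
  obtain U where U: "universal_evolution Q X U" using assms by (auto simp: phylogenetic_def)
  have Uf: "full_evolution Q X U" using U unfolding universal_evolution_def by blast
  have P1: "\<exists>A. primitive Q A \<and> ancestor Q A X"
    using Uf anc_full[OF Uf] unfolding full_evolution_def by blast
  have isoU0: "isotypic Q A (initial U)" if A: "primitive Q A" "ancestor Q A X" for A
  proof -
    obtain \<beta> where \<beta>: "evolution Q \<beta>" "initial \<beta> = A" "terminal \<beta> = X"
      using A unfolding ancestor_def by blast
    then have \<beta>f: "full_evolution Q X \<beta>" using A by (simp add: full_evolution_def)
    then have "embeds Q U \<beta>" using U unfolding universal_evolution_def by blast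
    then obtain r where "\<forall>k\<le>evlen U. r k \<le> evlen \<beta> \<and> isotypic Q (fst U ! k) (fst \<beta> ! r k)"
      unfolding embeds_def by blast
    then have "r 0 \<le> evlen \<beta>" "isotypic Q (fst U ! 0) (fst \<beta> ! r 0)" by auto
    moreover have "fst U ! 0 = initial U" using Uf
      by (simp add: full_evolution_def evolution_def initial_def hd_conv_nth)
    ultimately have "ancestor Q A (initial U)"
      using anc_nth1[OF \<beta>(1), of "r 0"] \<beta>(2) anc_trans[of Q A "fst \<beta> ! r 0" "initial U"]
      unfolding isotypic_def by simp
    then show ?thesis using Uf unfolding full_evolution_def primitive_def by blast
  qed
  have P2: "\<forall>A B. primitive Q A \<and> ancestor Q A X \<and> primitive Q B \<and> ancestor Q B X \<longrightarrow> isotypic Q A B"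
  proof (intro allI impI)
    fix A B assume h: "primitive Q A \<and> ancestor Q A X \<and> primitive Q B \<and> ancestor Q B X"
    have "isotypic Q A (initial U)" "isotypic Q B (initial U)" using isoU0 h by auto
    then show "isotypic Q A B" using iso_sym[of Q B "initial U"] iso_trans[of Q A "initial U" B] by simp
  qed
  have P3: "universal_evolution Q X S" if S: "short_evolution Q X S" for S
  proof -
    have Sf: "full_evolution Q X S" using S by (simp add: short_evolution_def)
    show ?thesis unfolding universal_evolution_def
    proof (intro conjI allI impI)
      fix \<beta> assume "full_evolution Q X \<beta>"
      then have "embeds Q U \<beta>" using U unfolding universal_evolution_def by blast
      then obtain r where r: "evlen U \<le> evlen \<beta>" "strict_mono_on {0..evlen U} r"
        "\<And>k. k \<le> evlen U \<Longrightarrow> r k \<le> evlen \<beta> \<and> isotypic Q (fst U ! k) (fst \<beta> ! r k)"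
        unfolding embeds_def by blast
      have c: "evlen S = evlen U" "\<And>k. k \<le> evlen U \<Longrightarrow> isotypic Q (fst U ! k) (fst S ! k)"
        using core[OF U S] by auto
      show "embeds Q S \<beta>" unfolding embeds_def c(1)
      proof (intro conjI exI[of _ r] allI impI)
        fix k assume k: "k \<le> evlen U"
        show "r k \<le> evlen \<beta>" using r(3)[OF k] by simp
        have "isotypic Q (fst S ! k) (fst U ! k)" using c(2)[OF k] by (rule iso_sym)
        then show "isotypic Q (fst S ! k) (fst \<beta> ! r k)" using r(3)[OF k] iso_trans[of Q "fst S ! k" "fst U ! k"] by simp
      qed (use r in auto)
    qed (rule Sf)
  qed
  have P4: "phylogenetic Q Y" if S: "short_evolution Q X S" and Y: "Y \<in> set (fst S)" for S Y
  proof -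
    have Sf: "full_evolution Q X S" using S by (simp add: short_evolution_def)
    have Se: "evolution Q S" using Sf by (simp add: full_evolution_def)
    have lenS: "length (fst S) = Suc (evlen S)" using Se by (auto simp: evolution_def evlen_def)
    obtain k where k: "k \<le> evlen S" "Y = fst S ! k" using Y lenS
      by (metis in_set_conv_nth less_Suc_eq_le)
    define S' where "S' = (take (Suc k) (fst S), take k (snd S))"
    have S'e: "evolution Q S'" "initial S' = initial S" "terminal S' = Y" "evlen S' = k"
      using evol_take[OF Se k(1)] k(2) by (simp_all add: S'_def)
    have S'f: "full_evolution Q Y S'" using S'e Sf by (simp add: full_evolution_def)
    have S'nth: "fst S' ! j = fst S ! j" if "j \<le> k" for j using that by (simp add: S'_def)
    define T where "T = (drop k (fst S), drop k (snd S))"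
    have Te: "evolution Q T" "initial T = Y" "terminal T = X" "evlen T = evlen S - k"
      using evol_drop[OF Se k(1)] k(2) Sf by (simp_all add: T_def full_evolution_def)
    have "universal_evolution Q Y S'"
      unfolding universal_evolution_def
    proof (intro conjI allI impI)
      fix \<beta> assume \<beta>f: "full_evolution Q Y \<beta>"
      then have \<beta>e: "evolution Q \<beta>" "terminal \<beta> = Y" by (auto simp: full_evolution_def)
      define \<beta>' where "\<beta>' = (fst \<beta> @ tl (fst T), snd \<beta> @ snd T)"
      have app: "evolution Q \<beta>'" "initial \<beta>' = initial \<beta>" "terminal \<beta>' = X"
        "evlen \<beta>' = evlen \<beta> + (evlen S - k)" "\<And>j. j \<le> evlen \<beta> \<Longrightarrow> fst \<beta>' ! j = fst \<beta> ! j"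
        using evol_append[OF \<beta>e(1) Te(1)] \<beta>e(2) Te by (simp_all add: \<beta>'_def)
      have \<beta>'f: "full_evolution Q X \<beta>'" using app \<beta>f by (simp add: full_evolution_def)
      then have "embeds Q U \<beta>'" using U unfolding universal_evolution_def by blast
      then obtain r where r: "strict_mono_on {0..evlen U} r"
        and rk: "\<And>j. j \<le> evlen U \<Longrightarrow> r j \<le> evlen \<beta>' \<and> isotypic Q (fst U ! j) (fst \<beta>' ! r j)"
        unfolding embeds_def by blast
      have eq: "evlen S = evlen U" and isoUS: "\<And>j. j \<le> evlen U \<Longrightarrow> isotypic Q (fst U ! j) (fst S ! j)"
        using core[OF U S] by auto
      have g1: "r 0 + (k - 0) \<le> r k" using smono_gap[OF r, of 0 k] k eq by simp
      have g2: "r k + (evlen U - k) \<le> r (evlen U)" using smono_gap[OF r, of k "evlen U"] k eq by simp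
      have "r (evlen U) \<le> evlen \<beta>'" using rk[of "evlen U"] by simp
      then have rkb: "r k \<le> evlen \<beta>" using g2 app(4) eq k by linarith
      have kb: "k \<le> evlen \<beta>" using g1 rkb by linarith
      have rmono: "strict_mono_on {0..k} r"
      proof (rule strict_mono_onI)
        fix a b assume "a \<in> {0..k}" "b \<in> {0..k}" "a < b"
        then show "r a < r b" using k eq by (intro strict_mono_onD[OF r]) auto
      qed
      show "embeds Q S' \<beta>"
        unfolding embeds_def S'e(4)
      proof (intro conjI exI[of _ r] allI impI)
        fix j assume j: "j \<le> k"
        have rj: "r j \<le> r k" using smono_gap[OF r, of j k] j k eq by simp
        show "r j \<le> evlen \<beta>" using rj rkb by simp
        have "isotypic Q (fst U ! j) (fst \<beta>' ! r j)" using rk[of j] j k eq by simp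
        moreover have "fst \<beta>' ! r j = fst \<beta> ! r j" using app(5) rj rkb by simp
        moreover have "isotypic Q (fst U ! j) (fst S ! j)" using isoUS[of j] j k eq by simp
        ultimately show "isotypic Q (fst S' ! j) (fst \<beta> ! r j)"
          using S'nth[OF j] iso_sym[of Q "fst U ! j" "fst S ! j"] iso_trans[of Q "fst S ! j" "fst U ! j"] by simp
      qed (use kb rmono in auto)
    qed (rule S'f)
    then show ?thesis unfolding phylogenetic_def by blast
  qed
  show ?thesis using P1 P2 P3 P4 by blast
qed

end
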